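(* Let $k\geq 3$ be an integer, let $j$ be an integer with $2\leq j\leq k$, and let $0\leq a<b\leq 1$. If $(a,b)\subseteq\left[0,\frac{k-j}{k}\right)$ or $(a,b)\subseteq\left[\frac{j}{k},1\right)$, then $$d_k(a,b)\geq \frac{\log j}{\log k}.$$
   Context: $T_k:[0,1)\to[0,1)$ is the map $T_k(x)=kx \bmod 1$. For $0\leq a<b\leq 1$, $\mathcal{W}_k(a,b)=\{x\in[0,1)\ :\ T_k^n(x)\notin(a,b)\text{ for all } n\geq 0\}$, and $d_k(a,b)$ denotes the Hausdorff dimension of $\mathcal{W}_k(a,b)$. *)

theory Defs
  imports "HOL-Analysis.Analysis"
begin

definition Tk :: "nat \<Rightarrow> real \<Rightarrow> real" where
  "Tk k x = frac (real k * x)"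

definition survivor :: "nat \<Rightarrow> real \<Rightarrow> real \<Rightarrow> real set" where
  "survivor k a b = {x. 0 \<le> x \<and> x < 1 \<and> (\<forall>n. (Tk k ^^ n) x \<notin> {a<..<b})}"

definition diam_pow :: "real \<Rightarrow> real set \<Rightarrow> ennreal" where
  "diam_pow s U = (if U = {} then 0 else if s = 0 then 1 else ennreal (diameter U powr s))"

definition hausdorff_approx :: "real \<Rightarrow> real \<Rightarrow> real set \<Rightarrow> ennreal" where
  "hausdorff_approx s \<delta> E =
     (INF C \<in> {C :: nat \<Rightarrow> real set. E \<subseteq> (\<Union>i. C i) \<and> (\<forall>i. bounded (C i) \<and> diameter (C i) \<le> \<delta>)}.
        (\<Sum>i. diam_pow s (C i)))"

definition hausdorff_measure :: "real \<Rightarrow> real set \<Rightarrow> ennreal" where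
  "hausdorff_measure s E = (SUP \<delta> \<in> {0<..}. hausdorff_approx s \<delta> E)"

definition hausdorff_dim :: "real set \<Rightarrow> real" where
  "hausdorff_dim E = Inf {s. 0 \<le> s \<and> hausdorff_measure s E = 0}"

definition dk :: "nat \<Rightarrow> real \<Rightarrow> real \<Rightarrow> real" where
  "dk k a b = hausdorff_dim (survivor k a b)"

end

theory Submission imports Defs begin
definition ds :: "real \<Rightarrow> (nat \<Rightarrow> real) \<Rightarrow> real" where
  "ds b d = (\<Sum>n. d n / b ^ Suc n)"

lemma geo_sum:
  fixes b M :: real
  assumes "b > 1"
  shows "(\<lambda>n. M / b ^ Suc n) sums (M / (b - 1))"
proof -
  have "norm (1/b) < 1" using assms by simp
  hence "(\<lambda>n. (1/b)^n) sums (1 / (1 - 1/b))" by (rule geometric_sums)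
  hence "(\<lambda>n. (M/b) * (1/b)^n) sums ((M/b) * (1 / (1 - 1/b)))" by (rule sums_mult)
  moreover have "(M/b) * (1 / (1 - 1/b)) = M / (b - 1)" using assms by (simp add: field_simps)
  moreover have "(\<lambda>n. (M/b) * (1/b)^n) = (\<lambda>n. M / b ^ Suc n)"
    by (simp add: power_divide field_simps)
  ultimately show ?thesis by metis
qed

lemma ds_summable:
  fixes b M :: real
  assumes "b > 1" "\<And>n. 0 \<le> d n" "\<And>n. d n \<le> M"
  shows "summable (\<lambda>n. d n / b ^ Suc n)"
proof (rule summable_comparison_test')
  show "summable (\<lambda>n. M / b ^ Suc n)" using geo_sum[OF assms(1)] by (rule sums_summable)
  fix n
  show "norm (d n / b ^ Suc n) \<le> M / b ^ Suc n"
    using assms by (simp add: divide_right_mono)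
qed

lemma ds_bounds:
  assumes "b > 1" "\<And>n. m \<le> d n" "\<And>n. d n \<le> M" "0 \<le> m"
  shows "m / (b - 1) \<le> ds b d" "ds b d \<le> M / (b - 1)"
proof -
  have s: "summable (\<lambda>n. d n / b ^ Suc n)"
    using ds_summable[of b d M] assms order_trans by blast
  show "m / (b - 1) \<le> ds b d"
    unfolding ds_def sums_unique[OF geo_sum[OF assms(1), of m]]
    apply (rule suminf_le[OF _ sums_summable[OF geo_sum[OF assms(1)]] s])
    using assms by (simp add: divide_right_mono)
  show "ds b d \<le> M / (b - 1)"
    unfolding ds_def sums_unique[OF geo_sum[OF assms(1), of M]]
    apply (rule suminf_le[OF _ s sums_summable[OF geo_sum[OF assms(1)]]])
    using assms by (simp add: divide_right_mono)
qed

lemma ds_strict: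
  assumes "b > 1" "\<And>n. 0 \<le> d n" "\<And>n. d n \<le> M" "d m < M"
  shows "ds b d < M / (b - 1)"
proof -
  have s: "summable (\<lambda>n. d n / b ^ Suc n)" using ds_summable assms by blast
  have g: "summable (\<lambda>n. M / b ^ Suc n)" using geo_sum[OF assms(1)] by (rule sums_summable)
  have "0 < (\<Sum>n. M / b ^ Suc n - d n / b ^ Suc n)"
  proof (subst suminf_pos_iff)
    show "summable (\<lambda>n. M / b ^ Suc n - d n / b ^ Suc n)" by (rule summable_diff[OF g s])
    show "\<And>n. 0 \<le> M / b ^ Suc n - d n / b ^ Suc n" using assms by (simp add: divide_right_mono)
    show "\<exists>i. 0 < M / b ^ Suc i - d i / b ^ Suc i"
      using assms by (intro exI[of _ m]) (simp add: divide_strict_right_mono)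
  qed
  also have "\<dots> = M / (b - 1) - ds b d"
    unfolding ds_def sums_unique[OF geo_sum[OF assms(1), of M]] suminf_diff[OF g s] ..
  finally show ?thesis by simp
qed

lemma ds_head:
  fixes b M :: real
  assumes "b > 1" "\<And>n. 0 \<le> d n" "\<And>n. d n \<le> M"
  shows "ds b d = d 0 / b + ds b (\<lambda>n. d (Suc n)) / b"
proof -
  have s: "summable (\<lambda>n. d n / b ^ Suc n)" using ds_summable assms by blast
  have s2: "summable (\<lambda>n. d (Suc n) / b ^ Suc n)" using ds_summable[of b "\<lambda>n. d (Suc n)" M] assms by blast
  have "(\<Sum>n. d (Suc n) / b ^ Suc (Suc n)) = ds b d - d 0 / b"
    using suminf_split_head[OF s] by (simp add: ds_def)
  moreover have "(\<Sum>n. d (Suc n) / b ^ Suc (Suc n)) = ds b (\<lambda>n. d (Suc n)) / b"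
    unfolding ds_def suminf_divide[OF s2, symmetric] by (simp add: field_simps)
  ultimately show ?thesis by simp
qed

lemma ds_shift:
  assumes "b > 1" "\<And>n. 0 \<le> d n" "\<And>n. d n \<le> M" "\<And>n. 0 \<le> d' n" "\<And>n. d' n \<le> M"
    and "\<forall>i<n. d i = d' i"
  shows "ds b d - ds b d' = (ds b (\<lambda>i. d (i + n)) - ds b (\<lambda>i. d' (i + n))) / b ^ n"
  using assms(6)
proof (induction n)
  case 0 then show ?case by simp
next
  case (Suc n)
  have h1: "ds b (\<lambda>i. d (i + n)) = d n / b + ds b (\<lambda>i. d (i + Suc n)) / b"
    using ds_head[of b "\<lambda>i. d (i + n)" M] assms by simp
  have h2: "ds b (\<lambda>i. d' (i + n)) = d' n / b + ds b (\<lambda>i. d' (i + Suc n)) / b"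
    using ds_head[of b "\<lambda>i. d' (i + n)" M] assms by simp
  have "d n = d' n" using Suc.prems by simp
  then have e: "ds b (\<lambda>i. d (i+n)) - ds b (\<lambda>i. d' (i+n)) = (ds b (\<lambda>i. d (i + Suc n)) - ds b (\<lambda>i. d' (i + Suc n))) / b"
    using h1 h2 by (simp add: diff_divide_distrib)
  have "ds b d - ds b d' = (ds b (\<lambda>i. d (i+n)) - ds b (\<lambda>i. d' (i+n))) / b ^ n"
    using Suc by simp
  then show ?case unfolding e by (simp add: power_Suc mult.commute)
qed


definition Xs :: "nat \<Rightarrow> nat \<Rightarrow> (nat \<Rightarrow> nat) \<Rightarrow> real" where
  "Xs k c w = ds (real k) (\<lambda>n. real c + real (w n))"

definition Ys :: "nat \<Rightarrow> (nat \<Rightarrow> nat) \<Rightarrow> real" where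
  "Ys j w = ds (real j) (\<lambda>n. real (w n))"

definition Wg :: "nat \<Rightarrow> (nat \<Rightarrow> nat) set" where
  "Wg j = {w. (\<forall>n. w n < j) \<and> (\<forall>n. \<exists>m\<ge>n. w m < j - 1)}"

lemma Wg_shift: "w \<in> Wg j \<Longrightarrow> (\<lambda>i. w (i + n)) \<in> Wg j"
  unfolding Wg_def
proof safe
  fix m assume "\<forall>n. \<exists>m\<ge>n. w m < j - 1"
  then obtain p where "p \<ge> m + n" "w p < j - 1" by blast
  then show "\<exists>p\<ge>m. w (p + n) < j - 1" by (intro exI[of _ "p - n"]) auto
qed auto

lemma X_bounds:
  assumes "2 \<le> j" "j < k" "\<forall>n. w n < j"
  shows "real c / (real k - 1) \<le> Xs k c w" "Xs k c w \<le> (real c + real j - 1) / (real k - 1)"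
  and "(\<exists>m. w m < j - 1) \<Longrightarrow> Xs k c w < (real c + real j - 1) / (real k - 1)"
proof -
  have b: "real k > 1" using assms by simp
  have dl: "\<And>n. real c \<le> real c + real (w n)" by simp
  have du: "\<And>n. real c + real (w n) \<le> real c + real j - 1"
    using assms(3) by (simp add: Suc_le_eq[symmetric]) (metis Suc_leI of_nat_Suc of_nat_le_iff add.commute le_diff_eq)
  show "real c / (real k - 1) \<le> Xs k c w" "Xs k c w \<le> (real c + real j - 1) / (real k - 1)"
    unfolding Xs_def using ds_bounds[OF b dl du] by auto
  assume "\<exists>m. w m < j - 1"
  then obtain m where m: "w m < j - 1" by blast
  have "real c + real (w m) < real c + real j - 1" using m assms(1)
    by (simp add: less_diff_conv)
  then show "Xs k c w < (real c + real j - 1) / (real k - 1)"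
    unfolding Xs_def by (intro ds_strict[OF b _ du]) auto
qed

lemma Y_bounds:
  assumes "2 \<le> j" "\<forall>n. w n < j"
  shows "0 \<le> Ys j w" "Ys j w \<le> 1"
proof -
  have b: "real j > 1" using assms by simp
  have du: "\<And>n. real (w n) \<le> real j - 1"
    using assms(2) by (metis Suc_leI le_diff_eq of_nat_Suc of_nat_le_iff add.commute)
  show "0 \<le> Ys j w" "Ys j w \<le> 1"
    unfolding Ys_def using ds_bounds[of "real j" 0 "\<lambda>n. real (w n)" "real j - 1"] b du by auto
qed


lemma frac_nat_add: "frac (real m + x) = frac x"
  by (metis frac_add_of_int_left of_int_of_nat_eq)

lemma X_head:
  assumes "2 \<le> j" "j < k" "\<forall>n. w n < j"
  shows "real k * Xs k c w = real (c + w 0) + Xs k c (\<lambda>n. w (Suc n))"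
proof -
  have b: "real k > 1" using assms by simp
  have du: "\<And>n. real c + real (w n) \<le> real c + real j"
    using assms(3) by (simp add: less_imp_le)
  have h: "Xs k c w = (real c + real (w 0)) / real k + Xs k c (\<lambda>n. w (Suc n)) / real k"
    unfolding Xs_def using ds_head[of "real k" "\<lambda>n. real c + real (w n)" "real c + real j", OF b _ du] by simp
  show ?thesis unfolding h using b by (simp add: field_simps)
qed

lemma Tk_iter:
  assumes "2 \<le> j" "j < k" "c + j \<le> k" "w \<in> Wg j"
  shows "(Tk k ^^ n) (Xs k c w) = Xs k c (\<lambda>i. w (i + n))"
proof (induction n)
  case 0 then show ?case by simp
next
  case (Suc n)
  let ?v = "\<lambda>i. w (i + n)"
  have v: "?v \<in> Wg j" using Wg_shift[OF assms(4)] .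
  have vd: "\<forall>i. ?v i < j" using v unfolding Wg_def by blast
  have v1: "(\<lambda>i. ?v (Suc i)) \<in> Wg j" using Wg_shift[OF v, of 1] by simp
  have "real c / (real k - 1) \<le> Xs k c (\<lambda>i. ?v (Suc i))"
    using X_bounds(1)[OF assms(1,2), of "\<lambda>i. ?v (Suc i)" c] v1 unfolding Wg_def by blast
  moreover have "0 \<le> real c / (real k - 1)" using assms by simp
  ultimately have lo: "0 \<le> Xs k c (\<lambda>i. ?v (Suc i))" by linarith
  have "Xs k c (\<lambda>i. ?v (Suc i)) < (real c + real j - 1) / (real k - 1)"
    using X_bounds(3)[OF assms(1,2), of "\<lambda>i. ?v (Suc i)" c] v1 unfolding Wg_def by blast
  also have "\<dots> \<le> 1" using assms by (simp add: divide_le_eq_1)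
  finally have hi: "Xs k c (\<lambda>i. ?v (Suc i)) < 1" .
  have "(Tk k ^^ Suc n) (Xs k c w) = frac (real k * Xs k c ?v)"
    by (simp only: funpow.simps comp_def Suc.IH) (simp add: Tk_def)
  also have "\<dots> = frac (real (c + ?v 0) + Xs k c (\<lambda>i. ?v (Suc i)))"
    using X_head[OF assms(1,2) vd, of c] by simp
  also have "\<dots> = Xs k c (\<lambda>i. ?v (Suc i))"
    using lo hi by (simp only: frac_nat_add frac_eq)
  finally show ?case by (simp add: add.commute)
qed

lemma X_survivor:
  assumes "2 \<le> j" "j < k" "w \<in> Wg j"
    and cases: "(c = k - j \<and> {a<..<b} \<subseteq> {0..<(real k - real j) / real k}) \<or>
                (c = 0 \<and> {a<..<b} \<subseteq> {real j / real k..<1})"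
  shows "Xs k c w \<in> survivor k a b"
proof -
  have cj: "c + j \<le> k" using cases assms by auto
  have rng: "Xs k c v \<in> {real c / (real k - 1) ..< (real c + real j - 1) / (real k - 1)} \<and> Xs k c v < 1 \<and> 0 \<le> Xs k c v"
    if v: "v \<in> Wg j" for v
  proof -
    have a1: "real c / (real k - 1) \<le> Xs k c v" using X_bounds(1)[OF assms(1,2)] v unfolding Wg_def by blast
    have a2: "Xs k c v < (real c + real j - 1) / (real k - 1)"
      using X_bounds(3)[OF assms(1,2)] v unfolding Wg_def by blast
    have "(real c + real j - 1) / (real k - 1) \<le> 1" using cj assms by (simp add: divide_le_eq_1)
    moreover have "0 \<le> real c / (real k - 1)" using assms by simp
    ultimately show ?thesis using a1 a2 by auto
  qed
  have notin: "Xs k c v \<notin> {a<..<b}" if v: "v \<in> Wg j" for v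
    using cases
  proof
    assume h: "c = k - j \<and> {a<..<b} \<subseteq> {0..<(real k - real j) / real k}"
    have "(real k - real j) / real k \<le> real c / (real k - 1)"
      using h assms by (simp add: of_nat_diff frac_le)
    then show ?thesis using rng[OF v] h by auto
  next
    assume h: "c = 0 \<and> {a<..<b} \<subseteq> {real j / real k..<1}"
    have "(real j - 1) / (real k - 1) \<le> real j / real k"
      using assms by (simp add: divide_simps algebra_simps)
    then show ?thesis using rng[OF v] h by auto
  qed
  show ?thesis unfolding survivor_def
    using rng[OF assms(3)] Tk_iter[OF assms(1,2) cj assms(3)] notin Wg_shift[OF assms(3)] by auto
qed


lemma kpow_s0:
  assumes "2 \<le> j" "j < k"
  shows "(real k ^ m) powr (ln (real j) / ln (real k)) = real j ^ m"
proof -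
  have k0: "real k > 1" using assms by simp
  have "real k powr (ln (real j) / ln (real k)) = real j"
    using assms k0 by (simp add: powr_def)
  moreover have "(real k ^ m) powr (ln (real j) / ln (real k)) = (real k powr (ln (real j) / ln (real k))) ^ m"
    using k0 by (simp add: powr_realpow[symmetric] powr_powr powr_power mult.commute)
  ultimately show ?thesis by simp
qed

lemma holder:
  assumes "2 \<le> j" "j < k" "\<forall>n. w n < j" "\<forall>n. w' n < j"
  shows "\<bar>Ys j w - Ys j w'\<bar> \<le> (real j * (real k - 1) / (real k - real j)) *
            \<bar>Xs k c w - Xs k c w'\<bar> powr (ln (real j) / ln (real k))"
proof (cases "w = w'")
  case True then show ?thesis by simp
next
  case False
  define s0 where "s0 = ln (real j) / ln (real k)"
  define A where "A = (real k - real j) / (real k - 1)"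
  have k1: "real k > 1" "real j > 1" "real j < real k" using assms by auto
  have A0: "0 < A" "A \<le> 1" using k1 by (auto simp: A_def)
  have s0: "0 < s0" "s0 \<le> 1" using k1 by (auto simp: s0_def)
  have ex: "\<exists>n. w n \<noteq> w' n" using False by auto
  define n where "n = (LEAST n. w n \<noteq> w' n)"
  have n: "w n \<noteq> w' n" "\<forall>i<n. w i = w' i"
    unfolding n_def using LeastI_ex[OF ex] not_less_Least by auto
  let ?v = "\<lambda>i. w (i + n)" and ?v' = "\<lambda>i. w' (i + n)"
  have vd: "\<forall>i. ?v i < j" "\<forall>i. ?v' i < j" "\<forall>i. ?v (Suc i) < j" "\<forall>i. ?v' (Suc i) < j"
    using assms by auto
  have dY: "Ys j w - Ys j w' = (Ys j ?v - Ys j ?v') / real j ^ n"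
    unfolding Ys_def
    using ds_shift[of "real j" "\<lambda>i. real (w i)" "real j" "\<lambda>i. real (w' i)" n] k1 assms n(2)
    by (simp add: less_imp_le)
  have "\<bar>Ys j ?v - Ys j ?v'\<bar> \<le> 1"
    using Y_bounds[OF assms(1) vd(1)] Y_bounds[OF assms(1) vd(2)] by linarith
  hence Yb: "\<bar>Ys j w - Ys j w'\<bar> \<le> 1 / real j ^ n"
    unfolding dY using k1 by (simp add: abs_div divide_right_mono)
  have dX: "Xs k c w - Xs k c w' = (Xs k c ?v - Xs k c ?v') / real k ^ n"
    unfolding Xs_def
    using ds_shift[of "real k" "\<lambda>i. real c + real (w i)" "real c + real j" "\<lambda>i. real c + real (w' i)" n] k1 assms n(2)
    by (simp add: less_imp_le)
  have h1: "real k * Xs k c ?v = real (c + w n) + Xs k c (\<lambda>i. ?v (Suc i))"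
    using X_head[OF assms(1,2) vd(1)] by simp
  have h2: "real k * Xs k c ?v' = real (c + w' n) + Xs k c (\<lambda>i. ?v' (Suc i))"
    using X_head[OF assms(1,2) vd(2)] by simp
  have T: "\<bar>Xs k c (\<lambda>i. ?v (Suc i)) - Xs k c (\<lambda>i. ?v' (Suc i))\<bar> \<le> (real j - 1) / (real k - 1)"
    using X_bounds(1,2)[OF assms(1,2) vd(3), of c] X_bounds(1,2)[OF assms(1,2) vd(4), of c] k1
    by (simp add: abs_le_iff diff_divide_distrib add_divide_distrib)
  have D: "1 \<le> \<bar>real (w n) - real (w' n)\<bar>" using n(1) by linarith
  have Aeq: "A = 1 - ((real j - 1)/(real k - 1))" using k1 by (simp add: A_def field_simps)
  have E: "real k * Xs k c ?v - real k * Xs k c ?v' = (real (w n) - real (w' n)) +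
      (Xs k c (\<lambda>i. ?v (Suc i)) - Xs k c (\<lambda>i. ?v' (Suc i)))"
    unfolding h1 h2 by simp
  have "A \<le> \<bar>real k * Xs k c ?v - real k * Xs k c ?v'\<bar>"
    unfolding E Aeq using T D by (smt (verit))
  hence "A \<le> real k * \<bar>Xs k c ?v - Xs k c ?v'\<bar>"
    using k1 by (simp add: right_diff_distrib[symmetric] abs_mult)
  hence Xb: "A / real k ^ Suc n \<le> \<bar>Xs k c w - Xs k c w'\<bar>"
    unfolding dX using k1 by (simp add: abs_div field_simps)
  have "(A / real k ^ Suc n) powr s0 = A powr s0 / real j ^ Suc n"
    using A0 k1 kpow_s0[OF assms(1,2), of "Suc n"] unfolding s0_def by (subst powr_divide) (auto simp del: power_Suc)
  moreover have "A \<le> A powr s0" using powr_mono'[of s0 1 A] A0 s0 by simp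
  ultimately have "A / real j ^ Suc n \<le> (A / real k ^ Suc n) powr s0"
    using k1 by (simp add: divide_right_mono)
  also have "\<dots> \<le> \<bar>Xs k c w - Xs k c w'\<bar> powr s0"
    using Xb A0 s0 k1 by (intro powr_mono2) auto
  finally have "A / real j ^ Suc n \<le> \<bar>Xs k c w - Xs k c w'\<bar> powr s0" .
  hence "(real j / A) * (A / real j ^ Suc n) \<le> (real j / A) * \<bar>Xs k c w - Xs k c w'\<bar> powr s0"
    using A0 k1 by (intro mult_left_mono) auto
  moreover have "(real j / A) * (A / real j ^ Suc n) = 1 / real j ^ n" using A0 k1 by simp
  moreover have "real j / A = real j * (real k - 1) / (real k - real j)" by (simp add: A_def)
  ultimately show ?thesis using Yb unfolding s0_def by simp
qed


definition Fj :: "nat \<Rightarrow> real \<Rightarrow> real" where "Fj j y = frac (real j * y)"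
definition dig :: "nat \<Rightarrow> real \<Rightarrow> nat \<Rightarrow> nat" where "dig j y n = nat \<lfloor>real j * (Fj j ^^ n) y\<rfloor>"

lemma Fj_iter_range: "0 \<le> y \<Longrightarrow> y < 1 \<Longrightarrow> 0 \<le> (Fj j ^^ n) y \<and> (Fj j ^^ n) y < 1"
  by (cases n) (auto simp: Fj_def frac_lt_1)

lemma dig_step:
  assumes "0 \<le> z" "z < 1" "j \<ge> 1"
  shows "z = real (nat \<lfloor>real j * z\<rfloor>) / real j + Fj j z / real j"
proof -
  have "0 \<le> \<lfloor>real j * z\<rfloor>" using assms by simp
  then have "real (nat \<lfloor>real j * z\<rfloor>) = of_int \<lfloor>real j * z\<rfloor>" by simp
  then show ?thesis using assms by (simp add: Fj_def frac_def field_simps)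
qed

lemma dig_lt:
  assumes "0 \<le> y" "y < 1" "j \<ge> 1"
  shows "dig j y n < j"
proof -
  have z: "0 \<le> (Fj j ^^ n) y" "(Fj j ^^ n) y < 1" using Fj_iter_range assms by auto
  have "real j * (Fj j ^^ n) y < real j" using z assms by simp
  hence "\<lfloor>real j * (Fj j ^^ n) y\<rfloor> < int j" by (simp add: floor_less_iff)
  moreover have "0 \<le> \<lfloor>real j * (Fj j ^^ n) y\<rfloor>" using z by simp
  ultimately show ?thesis unfolding dig_def by (simp add: nat_less_iff)
qed

lemma aux_div: "(x::real) = a / real j + b / real j \<Longrightarrow> j \<ge> 1 \<Longrightarrow> x / real j ^ N = a / real j ^ Suc N + b / real j ^ Suc N"
  by (simp add: field_simps)

lemma dig_partial:
  assumes "0 \<le> y" "y < 1" "j \<ge> 1"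
  shows "y = (\<Sum>n<N. real (dig j y n) / real j ^ Suc n) + (Fj j ^^ N) y / real j ^ N"
proof (induction N)
  case 0 then show ?case by simp
next
  case (Suc N)
  have z: "0 \<le> (Fj j ^^ N) y" "(Fj j ^^ N) y < 1" using Fj_iter_range assms by auto
  have "(Fj j ^^ N) y = real (dig j y N) / real j + (Fj j ^^ Suc N) y / real j"
    using dig_step[OF z assms(3)] unfolding dig_def by simp
  then have "(Fj j ^^ N) y / real j ^ N = real (dig j y N) / real j ^ Suc N + (Fj j ^^ Suc N) y / real j ^ Suc N"
    using assms(3) by (rule aux_div)
  then show ?case using Suc.IH by simp
qed

lemma dig_Y:
  assumes "0 \<le> y" "y < 1" "j \<ge> 2"
  shows "Ys j (dig j y) = y"
proof -
  have j1: "real j > 1" using assms by simp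
  have "(\<lambda>N. (\<Sum>n<N. real (dig j y n) / real j ^ Suc n) - y) \<longlonglongrightarrow> 0"
  proof (rule Lim_null_comparison)
    show "\<forall>\<^sub>F N in sequentially. norm ((\<Sum>n<N. real (dig j y n) / real j ^ Suc n) - y) \<le> (1 / real j) ^ N"
    proof (rule always_eventually, rule allI)
      fix N
      have z: "0 \<le> (Fj j ^^ N) y" "(Fj j ^^ N) y < 1" using Fj_iter_range assms by auto
      have e: "(\<Sum>n<N. real (dig j y n) / real j ^ Suc n) - y = - ((Fj j ^^ N) y / real j ^ N)"
        using dig_partial[OF assms(1,2), of j N] assms by linarith
      have "norm ((\<Sum>n<N. real (dig j y n) / real j ^ Suc n) - y) = (Fj j ^^ N) y / real j ^ N"
        unfolding e using z by simp
      also have "\<dots> \<le> (1 / real j) ^ N" using z j1 by (simp add: power_one_over divide_right_mono)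
      finally show "norm ((\<Sum>n<N. real (dig j y n) / real j ^ Suc n) - y) \<le> (1 / real j) ^ N" .
    qed
    show "(\<lambda>N. (1 / real j) ^ N) \<longlonglongrightarrow> 0" using j1 by (intro LIMSEQ_power_zero) simp
  qed
  then have "(\<lambda>N. ((\<Sum>n<N. real (dig j y n) / real j ^ Suc n) - y) + y) \<longlonglongrightarrow> 0 + y"
    by (intro tendsto_add) auto
  then have "(\<lambda>n. real (dig j y n) / real j ^ Suc n) sums y" unfolding sums_def by simp
  then show ?thesis unfolding Ys_def ds_def by (rule sums_unique[symmetric])
qed

lemma dig_shift: "dig j y (i + n) = dig j ((Fj j ^^ n) y) i"
  unfolding dig_def by (simp add: funpow_add)

lemma dig_Wg:
  assumes "0 \<le> y" "y < 1" "j \<ge> 2"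
  shows "dig j y \<in> Wg j"
proof -
  have lt: "\<forall>n. dig j y n < j" using dig_lt assms by auto
  have "\<exists>m\<ge>n. dig j y m < j - 1" for n
  proof (rule ccontr)
    assume neg: "\<not> (\<exists>m\<ge>n. dig j y m < j - 1)"
    have all: "\<forall>m\<ge>n. dig j y m = j - 1"
    proof (intro allI impI)
      fix m assume "m \<ge> n"
      then have "\<not> dig j y m < j - 1" using neg by auto
      moreover have "dig j y m < j" using lt by auto
      ultimately show "dig j y m = j - 1" by arith
    qed
    define z where "z = (Fj j ^^ n) y"
    have z: "0 \<le> z" "z < 1" using Fj_iter_range assms unfolding z_def by auto
    have "dig j z = (\<lambda>i. j - 1)" using all dig_shift[of j y _ n] unfolding z_def by (auto simp: fun_eq_iff)
    then have "Ys j (dig j z) = 1"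
      using sums_unique[OF geo_sum[of "real j" "real j - 1"]] assms unfolding Ys_def ds_def
      by (simp add: of_nat_diff)
    then show False using dig_Y[OF z assms(3)] z by simp
  qed
  then show ?thesis using lt unfolding Wg_def by auto
qed


lemma diam_pow_ge:
  assumes "U \<noteq> {}" "0 \<le> s" "s \<le> s0" "0 \<le> diameter U" "diameter U \<le> 1"
  shows "ennreal (diameter U powr s0) \<le> diam_pow s U"
proof (cases "s = 0")
  case True
  have "diameter U powr s0 \<le> 1 powr s0"
    using assms by (intro powr_mono2) auto
  then show ?thesis using True assms by (simp add: diam_pow_def)
next
  case False
  have "diameter U powr s0 \<le> diameter U powr s" using powr_mono'[OF assms(3,4,5)] .
  then show ?thesis using False assms by (simp add: diam_pow_def)
qed

lemma lower_bound:
  assumes j2: "2 \<le> j" and jk: "j < k"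
    and sub: "Xs k c ` Wg j \<subseteq> E"
    and cov: "E \<subseteq> (\<Union>i. C i)" and bd: "\<And>i. bounded (C i)" and dm: "\<And>i. diameter (C i) \<le> 1"
    and s: "0 \<le> s" "s \<le> ln (real j) / ln (real k)"
  shows "ennreal (1 / (2 * (real j * (real k - 1) / (real k - real j)))) \<le> (\<Sum>i. diam_pow s (C i))"
proof -
  define s0 where "s0 = ln (real j) / ln (real k)"
  define C0 where "C0 = real j * (real k - 1) / (real k - real j)"
  have C0: "0 < C0" using j2 jk by (simp add: C0_def)
  have s00: "0 \<le> s0" using j2 jk by (simp add: s0_def)
  define V where "V i = Ys j ` {w\<in>Wg j. Xs k c w \<in> C i}" for i
  define D where "D i = C0 * diameter (C i) powr s0" for i
  define v where "v i = (SOME x. x \<in> V i)" for i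
  define I where "I i = (if V i = {} then {} else {v i - D i .. v i + D i})" for i
  have D0: "0 \<le> D i" for i using C0 by (simp add: D_def)
  have Vd: "\<bar>y - y'\<bar> \<le> D i" if yy: "y \<in> V i" "y' \<in> V i" for i y y'
  proof -
    obtain w where w: "w \<in> Wg j" "Xs k c w \<in> C i" "y = Ys j w" using yy(1) by (auto simp: V_def)
    obtain w' where w': "w' \<in> Wg j" "Xs k c w' \<in> C i" "y' = Ys j w'" using yy(2) by (auto simp: V_def)
    have "\<bar>y - y'\<bar> \<le> C0 * \<bar>Xs k c w - Xs k c w'\<bar> powr s0"
      using holder[OF j2 jk, of w w' c] w w' unfolding Wg_def C0_def s0_def by auto
    also have "\<dots> \<le> D i"
      unfolding D_def using C0 s00 diameter_bounded_bound[OF bd w(2) w'(2)]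
      by (intro mult_left_mono powr_mono2) (auto simp: dist_real_def)
    finally show ?thesis .
  qed
  have cover: "{0..<1} \<subseteq> (\<Union>i. I i)"
  proof
    fix y :: real assume y: "y \<in> {0..<1}"
    have w: "dig j y \<in> Wg j" "Ys j (dig j y) = y" using dig_Wg dig_Y y j2 by auto
    then have "Xs k c (dig j y) \<in> E" using sub by auto
    then obtain i where i: "Xs k c (dig j y) \<in> C i" using cov by auto
    then have yV: "y \<in> V i" unfolding V_def using w by force
    then have "v i \<in> V i" unfolding v_def by (rule someI)
    then have "\<bar>y - v i\<bar> \<le> D i" using Vd yV by auto
    then have "y \<in> I i" unfolding I_def using yV by auto
    then show "y \<in> (\<Union>i. I i)" by auto
  qed
  have meas: "emeasure lborel (I i) \<le> ennreal (2 * C0) * diam_pow s (C i)" for i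
  proof (cases "V i = {}")
    case True then show ?thesis by (simp add: I_def)
  next
    case False
    then have Cne: "C i \<noteq> {}" unfolding V_def by auto
    have "emeasure lborel (I i) = ennreal (2 * D i)" using False D0[of i] by (simp add: I_def)
    also have "\<dots> = ennreal (2 * C0) * ennreal (diameter (C i) powr s0)"
      using C0 by (simp add: D_def ennreal_mult mult.assoc)
    also have "\<dots> \<le> ennreal (2 * C0) * diam_pow s (C i)"
      using diam_pow_ge[OF Cne s(1) _ diameter_ge_0[OF bd] dm, of s0] s unfolding s0_def
      by (intro mult_left_mono) auto
    finally show ?thesis .
  qed
  have Im: "I i \<in> sets borel" for i by (auto simp: I_def)
  have "(\<Union>i. I i) \<in> sets borel" using Im by auto
  have "ennreal 1 = emeasure lborel {0..<(1::real)}" by simp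
  also have "emeasure lborel {0..<(1::real)} \<le> emeasure lborel (\<Union>i. I i)" using cover \<open>(\<Union>i. I i) \<in> sets borel\<close> by (intro emeasure_mono) auto
  also have "\<dots> \<le> (\<Sum>i. emeasure lborel (I i))"
    by (rule emeasure_subadditive_countably) (auto simp: I_def)
  also have "\<dots> \<le> (\<Sum>i. ennreal (2 * C0) * diam_pow s (C i))"
    using meas by (intro suminf_le) auto
  also have "\<dots> = ennreal (2 * C0) * (\<Sum>i. diam_pow s (C i))" by simp
  finally have one: "ennreal 1 \<le> ennreal (2 * C0) * (\<Sum>i. diam_pow s (C i))" .
  have "ennreal (1 / (2 * C0)) = ennreal (1 / (2 * C0)) * ennreal 1" by simp
  also have "\<dots> \<le> ennreal (1 / (2 * C0)) * (ennreal (2 * C0) * (\<Sum>i. diam_pow s (C i)))"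
    using one by (intro mult_left_mono) auto
  also have "\<dots> = (\<Sum>i. diam_pow s (C i))"
    using C0 by (simp add: mult.assoc[symmetric] ennreal_mult[symmetric])
  finally show ?thesis unfolding C0_def .
qed


lemma approx_small:
  assumes E: "E \<subseteq> {0..<1}" and N: "N \<ge> 1" and Nd: "1 / real N \<le> \<delta>"
  shows "hausdorff_approx 2 \<delta> E \<le> ennreal (1 / real N)"
proof -
  define C where "C i = (if i < N then {real i / real N .. (real i + 1) / real N} else {})" for i
  have N0: "real N > 0" using N by simp
  have cov: "E \<subseteq> (\<Union>i. C i)"
  proof
    fix x assume "x \<in> E"
    then have x: "0 \<le> x" "x < 1" using E by auto
    define i where "i = nat \<lfloor>x * real N\<rfloor>"
    have fl: "0 \<le> \<lfloor>x * real N\<rfloor>" using x N0 by simp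
    have "x * real N < real N" using x N0 by simp
    then have "\<lfloor>x * real N\<rfloor> < int N" by (simp add: floor_less_iff)
    then have iN: "i < N" using fl unfolding i_def by (simp add: nat_less_iff)
    have ri: "real i = of_int \<lfloor>x * real N\<rfloor>" using fl unfolding i_def by simp
    have "real i \<le> x * real N" "x * real N < real i + 1" unfolding ri by linarith+
    then have "real i / real N \<le> x" "x \<le> (real i + 1) / real N"
      using N0 by (simp_all add: field_simps)
    then show "x \<in> (\<Union>i. C i)" using iN unfolding C_def by auto
  qed
  have dCi: "C i \<noteq> {} \<and> diameter (C i) = 1 / real N" if iN: "i < N" for i
  proof -
    have le: "real i / real N \<le> (real i + 1) / real N" using N0 by (simp add: divide_right_mono)
    have "(real i + 1) / real N - real i / real N = 1 / real N" by (simp add: diff_divide_distrib[symmetric])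
    then show ?thesis using le iN unfolding C_def by auto
  qed
  have dC: "diameter (C i) \<le> \<delta>" for i
  proof (cases "i < N")
    case True
    then show ?thesis using Nd dCi by simp
  next
    case False
    have "0 \<le> 1 / real N" by simp
    then have "0 \<le> \<delta>" using Nd by linarith
    then show ?thesis using False unfolding C_def by simp
  qed
  have bC: "bounded (C i)" for i unfolding C_def by simp
  have "hausdorff_approx 2 \<delta> E \<le> (\<Sum>i. diam_pow 2 (C i))"
    unfolding hausdorff_approx_def using cov dC bC by (intro INF_lower) auto
  also have "(\<Sum>i. diam_pow 2 (C i)) = (\<Sum>i<N. diam_pow 2 (C i))"
    by (rule suminf_finite) (auto simp: C_def diam_pow_def)
  also have "\<dots> = (\<Sum>i<N. ennreal ((1 / real N) ^ 2))"
  proof (rule sum.cong)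
    fix i assume "i \<in> {..<N}"
    then have "C i \<noteq> {}" "diameter (C i) = 1 / real N" using dCi by auto
    then show "diam_pow 2 (C i) = ennreal ((1 / real N) ^ 2)" using N0
      by (simp add: diam_pow_def powr_numeral)
  qed simp
  also have "\<dots> = of_nat N * ennreal ((1 / real N) ^ 2)"
    by (simp only: sum_constant card_lessThan)
  also have "\<dots> = ennreal (real N * (1 / real N) ^ 2)"
    by (simp only: ennreal_of_nat_eq_real_of_nat ennreal_mult'[symmetric] of_nat_0_le_iff)
  also have "real N * (1 / real N) ^ 2 = 1 / real N" using N0 by (simp add: power2_eq_square)
  finally show ?thesis .
qed

lemma measure2_zero:
  assumes E: "E \<subseteq> {0..<1}"
  shows "hausdorff_measure 2 E = 0"
proof -
  have "hausdorff_approx 2 \<delta> E = 0" if d: "\<delta> > 0" for \<delta>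
  proof -
    have "hausdorff_approx 2 \<delta> E \<le> 0"
    proof (rule ennreal_le_epsilon)
      fix e :: real assume e: "0 < e"
      define N where "N = nat \<lceil>max (1 / \<delta>) (1 / e)\<rceil> + 1"
      have N1: "N \<ge> 1" unfolding N_def by simp
      have "max (1 / \<delta>) (1 / e) \<le> real N" unfolding N_def by linarith
      then have "1 / \<delta> \<le> real N" "1 / e \<le> real N" by auto
      then have "1 / real N \<le> \<delta>" "1 / real N \<le> e" using d e N1
        by (auto simp: field_simps)
      then have "hausdorff_approx 2 \<delta> E \<le> ennreal (1 / real N)" using approx_small[OF E N1] by auto
      also have "\<dots> \<le> ennreal e" using \<open>1 / real N \<le> e\<close> by (rule ennreal_leI)
      finally show "hausdorff_approx 2 \<delta> E \<le> 0 + ennreal e" by simp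
    qed
    then show ?thesis by simp
  qed
  then show ?thesis unfolding hausdorff_measure_def by simp
qed

theorem mainTheorem3:
  fixes k j :: nat and a b :: real
  assumes "k \<ge> 3" and "2 \<le> j" and "j \<le> k"
    and "0 \<le> a" and "a < b" and "b \<le> 1"
    and "{a<..<b} \<subseteq> {0..<(real k - real j) / real k} \<or> {a<..<b} \<subseteq> {real j / real k..<1}"
  shows "dk k a b \<ge> ln (real j) / ln (real k)"
proof -
  have mid: "(a + b) / 2 \<in> {a<..<b}" using assms by auto
  have jk: "j < k"
  proof (rule ccontr)
    assume "\<not> j < k"
    then have "j = k" using assms by simp
    then show False using assms(7) mid assms(1) by auto
  qed
  obtain c where cases: "(c = k - j \<and> {a<..<b} \<subseteq> {0..<(real k - real j) / real k}) \<or>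
                (c = 0 \<and> {a<..<b} \<subseteq> {real j / real k..<1})"
    using assms(7) by blast
  define E where "E = survivor k a b"
  have sub: "Xs k c ` Wg j \<subseteq> E" unfolding E_def using X_survivor[OF assms(2) jk _ cases] by auto
  have E01: "E \<subseteq> {0..<1}" unfolding E_def survivor_def by auto
  define S where "S = {s. 0 \<le> s \<and> hausdorff_measure s E = 0}"
  define C0 where "C0 = real j * (real k - 1) / (real k - real j)"
  have C0: "0 < C0" using assms jk by (simp add: C0_def)
  have "2 \<in> S" unfolding S_def using measure2_zero[OF E01] by simp
  have pos: "hausdorff_measure s E \<noteq> 0" if s: "0 \<le> s" "s \<le> ln (real j) / ln (real k)" for s
  proof -
    have "ennreal (1 / (2 * C0)) \<le> hausdorff_approx s 1 E"
      unfolding hausdorff_approx_def C0_def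
      by (rule INF_greatest, rule lower_bound[OF assms(2) jk sub _ _ _ s]) auto
    also have "\<dots> \<le> hausdorff_measure s E"
      unfolding hausdorff_measure_def by (rule SUP_upper) auto
    finally have "ennreal (1 / (2 * C0)) \<le> hausdorff_measure s E" .
    moreover have "0 < ennreal (1 / (2 * C0))" using C0 by simp
    ultimately show ?thesis by auto
  qed
  have "ln (real j) / ln (real k) \<le> Inf S"
  proof (rule cInf_greatest)
    show "S \<noteq> {}" using \<open>2 \<in> S\<close> by auto
    fix s assume "s \<in> S"
    then have "0 \<le> s" "hausdorff_measure s E = 0" unfolding S_def by auto
    then show "ln (real j) / ln (real k) \<le> s" using pos by force
  qed
  then show ?thesis unfolding dk_def hausdorff_dim_def S_def E_def .
qed

end
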